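(* Let $F(X;\theta)=f_L\circ\cdots\circ f_1(X)$ be a convolutional network with parameters $\theta=\{W^1,\dots,W^L,B^1,\dots,B^L\}$, and let $\omega_t=f_L\circ\cdots\circ f_t$ and $\alpha_t=f_t\circ\cdots\circ f_1$ for $t=1,\dots,L$, with $\omega_{L+1}$ and $\alpha_0$ the identity maps. Let $V,X\in\mathbb{R}^{n_1\times\ell_1}\otimes\mathbb{R}^{m_1}$, $t\in\{1,\dots,L\}$, and $X^t=\alpha_{t-1}(X)$. Then for a parameter $\theta^t\in\{W^t,B^t\}$, $$\big(\nabla_{\theta^t}\mathrm{D}F(X;\theta)\llcorner V\big)^*=\nabla^*_{\theta^t}f_t(X^t)\cdot\Big((\mathrm{D}\alpha_t(X)\cdot V)\lrcorner\mathrm{D}^2\omega_{t+1}(X^{t+1})\Big)^*+\Big((\mathrm{D}\alpha_{t-1}(X)\cdot V)\lrcorner\mathrm{D}\nabla_{\theta^t}f_t(X^t)\Big)^*\cdot\mathrm{D}^*\omega_{t+1}(X^{t+1}).$$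
   Context: All spaces are finite-dimensional real inner product spaces with tensor products carrying the induced inner product; $L^*$ denotes the adjoint. For a map $g(x;\theta)$: $\mathrm{D}g$ is the derivative in the state $x$ and $\nabla_\theta g$ the derivative in the parameter $\theta$ (both linear maps), $\mathrm{D}^*g,\nabla^*_\theta g$ their adjoints; $\mathrm{D}^2g(x)$ is the bilinear map $(e,\bar e)\mapsto\frac{d}{dt}\mathrm{D}g(x+te)\cdot\bar e|_{t=0}$; $\mathrm{D}\nabla_\theta g(x;\theta)$ is the bilinear map $(e,u)\mapsto\frac{d}{dt}\nabla_\theta g(x+te;\theta)\cdot u|_{t=0}$; $\nabla_\theta\mathrm{D}g(x;\theta)$ is the bilinear map $(u,e)\mapsto\frac{d}{dt}\mathrm{D}g(x;\theta+tu)\cdot e|_{t=0}$. For a bilinear $B(\cdot,\cdot)$, $y\lrcorner B$ is the linear map $e\mapsto B(y,e)$ and $B\llcorner y$ is $e\mapsto B(e,y)$. The network: for $t=1,\dots,L$, $f_t:\mathbb{R}^{n_t\times\ell_t}\otimes\mathbb{R}^{m_t}\to\mathbb{R}^{n_{t+1}\times\ell_{t+1}}\otimes\mathbb{R}^{m_{t+1}}$ is $f_t(X^t)=\Psi_t\big(S_t(C^t(W^t,X^t)+B^t)\big)$ with parameters $W^t\in\mathbb{R}^{p_t\times q_t}\otimes\mathbb{R}^{m_{t+1}}$, $B^t\in\mathbb{R}^{\bar n_t\times\bar\ell_t}\otimes\mathbb{R}^{m_{t+1}}$, where (with orthonormal bases $\{e_i\}$ of $\mathbb{R}^{m_t}$,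 $\{\tilde e_a\}$ of $\mathbb{R}^{m_{t+1}}$, $\{E_{jk}\}$ of $\mathbb{R}^{n_t\times\ell_t}$, $\{\bar E_{jk}\}$ of $\mathbb{R}^{\bar n_t\times\bar\ell_t}$, $\{\tilde E_{rs}\}$ of $\mathbb{R}^{p_t\times q_t}$): $C^t(W,X)=\sum_aC_a(W,X)\otimes\tilde e_a$ with $C_a(W,X)=\sum_{j=1}^{\bar n_t}\sum_{k=1}^{\bar\ell_t}\langle W_a,\Phi_{A_a}(\mathcal{K}_{1+(j-1)\Delta,1+(k-1)\Delta}(X))\rangle\bar E_{jk}$ for $W=\sum_aW_a\otimes\tilde e_a$, fixed $A_a\in\mathbb{R}^{m_t}$ and stride $\Delta\ge1$; $\mathcal{K}_{jk}(\sum_iX_i\otimes e_i)=\sum_i\kappa_{jk}(X_i)\otimes e_i$, $\kappa_{jk}(Q)=\sum_{r,s}\langle Q,E_{j+r-1,k+s-1}\rangle\tilde E_{rs}$ (dimensions such that crops are defined); $\Phi_v(\sum_iU_i\otimes e_i)=\sum_iv_iU_i$ for $v=\sum_iv_ie_i$; $S_t(\sum_aY_a\otimes\tilde e_a)=\sum_a\sigma(Y_a)\otimes\tilde e_a$ with $\sigma(Y)=\sum_{j,k}\bar\sigma_t(\langle Y,\bar E_{jk}\rangle)\bar E_{jk}$ for a twice continuously differentiable $\bar\sigma_t:\mathbb{R}\to\mathbb{R}$; and $\Psi_t(\sum_aY_a\otimes\tilde e_a)=\sum_a\psi_t(Y_a)\otimes\tilde e_a$ for a linear $\psi_t:\mathbb{R}^{\bar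 n_t\times\bar\ell_t}\to\mathbb{R}^{n_{t+1}\times\ell_{t+1}}$. In the claim, $\mathrm{D}F(X;\theta)$ is the derivative of $F$ in $X$, and $f_t$, $\omega_t$, $\alpha_t$ depend on the parameters, which are held fixed except $\theta^t$ where differentiated. *)

theory Defs
  imports "HOL-Analysis.Analysis"
begin

text \<open>A tensor X in R^{n x l} (x) R^m is stored as  X j k i = <X_i, E_jk>  for
  1 <= j <= n, 1 <= k <= l, 1 <= i <= m, and 0 outside this box.\<close>

type_synonym tensor = "nat \<Rightarrow> nat \<Rightarrow> nat \<Rightarrow> real"
type_synonym dims = "nat \<times> nat \<times> nat"

definition tbox :: "dims \<Rightarrow> tensor set" where
  "tbox d = (case d of (n, l, m) \<Rightarrow>
     {X. \<forall>j k i. X j k i \<noteq> 0 \<longrightarrow> j \<in> {1..n} \<and> k \<in> {1..l} \<and> i \<in> {1..m}})"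

definition tinner :: "dims \<Rightarrow> tensor \<Rightarrow> tensor \<Rightarrow> real" where
  "tinner d X Y = (case d of (n, l, m) \<Rightarrow>
     (\<Sum>j=1..n. \<Sum>k=1..l. \<Sum>i=1..m. X j k i * Y j k i))"

definition tadd :: "tensor \<Rightarrow> tensor \<Rightarrow> tensor" where
  "tadd X Y = (\<lambda>j k i. X j k i + Y j k i)"

definition tscale :: "real \<Rightarrow> tensor \<Rightarrow> tensor" where
  "tscale c X = (\<lambda>j k i. c * X j k i)"

definition adjoint_on :: "dims \<Rightarrow> dims \<Rightarrow> (tensor \<Rightarrow> tensor) \<Rightarrow> tensor \<Rightarrow> tensor" where
  "adjoint_on S T Lm y =
     (THE x. x \<in> tbox S \<and> (\<forall>e\<in>tbox S. tinner T (Lm e) y = tinner S e x))"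

definition Dx :: "(tensor \<Rightarrow> tensor) \<Rightarrow> tensor \<Rightarrow> tensor \<Rightarrow> tensor" where
  "Dx g x e = (\<lambda>j k i. deriv (\<lambda>s. g (tadd x (tscale s e)) j k i) 0)"

definition Dth :: "(tensor \<Rightarrow> tensor \<Rightarrow> tensor) \<Rightarrow> tensor \<Rightarrow> tensor \<Rightarrow> tensor \<Rightarrow> tensor" where
  "Dth g x \<theta> u = Dx (\<lambda>\<theta>'. g x \<theta>') \<theta> u"

definition D2 :: "(tensor \<Rightarrow> tensor) \<Rightarrow> tensor \<Rightarrow> tensor \<Rightarrow> tensor \<Rightarrow> tensor" where
  "D2 g x e ebar = Dx (\<lambda>x'. Dx g x' ebar) x e"

definition DDth :: "(tensor \<Rightarrow> tensor \<Rightarrow> tensor) \<Rightarrow> tensor \<Rightarrow> tensor \<Rightarrow> tensor \<Rightarrow> tensor \<Rightarrow> tensor" where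
  "DDth g x \<theta> e u = Dx (\<lambda>x'. Dth g x' \<theta> u) x e"

definition DthD :: "(tensor \<Rightarrow> tensor \<Rightarrow> tensor) \<Rightarrow> tensor \<Rightarrow> tensor \<Rightarrow> tensor \<Rightarrow> tensor \<Rightarrow> tensor" where
  "DthD g x \<theta> u e = Dx (\<lambda>\<theta>'. Dx (\<lambda>x'. g x' \<theta>') x e) \<theta> u"

definition contr_left :: "'a \<Rightarrow> ('a \<Rightarrow> 'b \<Rightarrow> 'c) \<Rightarrow> 'b \<Rightarrow> 'c" where
  "contr_left y Bl = (\<lambda>e. Bl y e)"

definition contr_right :: "('a \<Rightarrow> 'b \<Rightarrow> 'c) \<Rightarrow> 'b \<Rightarrow> 'a \<Rightarrow> 'c" where
  "contr_right Bl y = (\<lambda>e. Bl e y)"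

definition twice_cont_diff :: "(real \<Rightarrow> real) \<Rightarrow> bool" where
  "twice_cont_diff g \<longleftrightarrow> (\<exists>g' g''. (\<forall>x. (g has_real_derivative g' x) (at x)) \<and>
      (\<forall>x. (g' has_real_derivative g'' x) (at x)) \<and> continuous_on UNIV g'')"

text \<open>Architecture data, indexed by the layer t (dimensions of the state space of layer t are
  rows t x cols t x chans t; n_bar, l_bar, p, q, stride, A_a, sigma_bar, psi as in the paper;
  mix t a i = i-th coordinate of A_a for layer t; psi t is given by its matrix:
  psi_t(Y) j k = sum_{j',k'} psi_mat t j k j' k' * Y j' k').\<close>
record cnn_arch =
  rows :: "nat \<Rightarrow> nat"
  cols :: "nat \<Rightarrow> nat"
  chans :: "nat \<Rightarrow> nat"
  rows_bar :: "nat \<Rightarrow> nat"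
  cols_bar :: "nat \<Rightarrow> nat"
  ker_rows :: "nat \<Rightarrow> nat"
  ker_cols :: "nat \<Rightarrow> nat"
  stride :: "nat \<Rightarrow> nat"
  mix :: "nat \<Rightarrow> nat \<Rightarrow> nat \<Rightarrow> real"
  act :: "nat \<Rightarrow> real \<Rightarrow> real"
  psi_mat :: "nat \<Rightarrow> nat \<Rightarrow> nat \<Rightarrow> nat \<Rightarrow> nat \<Rightarrow> real"

definition sdims :: "cnn_arch \<Rightarrow> nat \<Rightarrow> dims" where
  "sdims N t = (rows N t, cols N t, chans N t)"

definition kappa :: "nat \<Rightarrow> nat \<Rightarrow> nat \<Rightarrow> nat \<Rightarrow> (nat \<Rightarrow> nat \<Rightarrow> real) \<Rightarrow> nat \<Rightarrow> nat \<Rightarrow> real" where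
  "kappa p q j k Q = (\<lambda>r s. if r \<in> {1..p} \<and> s \<in> {1..q} then Q (j + r - 1) (k + s - 1) else 0)"

definition Kcrop :: "nat \<Rightarrow> nat \<Rightarrow> nat \<Rightarrow> nat \<Rightarrow> tensor \<Rightarrow> tensor" where
  "Kcrop p q j k X = (\<lambda>r s i. kappa p q j k (\<lambda>a b. X a b i) r s)"

definition Phi :: "nat \<Rightarrow> (nat \<Rightarrow> real) \<Rightarrow> tensor \<Rightarrow> nat \<Rightarrow> nat \<Rightarrow> real" where
  "Phi m v U = (\<lambda>r s. \<Sum>i=1..m. v i * U r s i)"

definition mat_inner :: "nat \<Rightarrow> nat \<Rightarrow> (nat \<Rightarrow> nat \<Rightarrow> real) \<Rightarrow> (nat \<Rightarrow> nat \<Rightarrow> real) \<Rightarrow> real" where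
  "mat_inner p q P Q = (\<Sum>r=1..p. \<Sum>s=1..q. P r s * Q r s)"

definition conv :: "cnn_arch \<Rightarrow> nat \<Rightarrow> tensor \<Rightarrow> tensor \<Rightarrow> tensor" where
  "conv N t Wt X = (\<lambda>j k a.
     if j \<in> {1..rows_bar N t} \<and> k \<in> {1..cols_bar N t} \<and> a \<in> {1..chans N (Suc t)} then
       mat_inner (ker_rows N t) (ker_cols N t) (\<lambda>r s. Wt r s a)
         (Phi (chans N t) (mix N t a)
            (Kcrop (ker_rows N t) (ker_cols N t)
               (1 + (j - 1) * stride N t) (1 + (k - 1) * stride N t) X))
     else 0)"

definition Smap :: "cnn_arch \<Rightarrow> nat \<Rightarrow> tensor \<Rightarrow> tensor" where
  "Smap N t Y = (\<lambda>j k a.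
     if j \<in> {1..rows_bar N t} \<and> k \<in> {1..cols_bar N t} \<and> a \<in> {1..chans N (Suc t)}
     then act N t (Y j k a) else 0)"

definition Psimap :: "cnn_arch \<Rightarrow> nat \<Rightarrow> tensor \<Rightarrow> tensor" where
  "Psimap N t Y = (\<lambda>j k a.
     if j \<in> {1..rows N (Suc t)} \<and> k \<in> {1..cols N (Suc t)} \<and> a \<in> {1..chans N (Suc t)}
     then (\<Sum>j'=1..rows_bar N t. \<Sum>k'=1..cols_bar N t. psi_mat N t j k j' k' * Y j' k' a)
     else 0)"

definition layer :: "cnn_arch \<Rightarrow> nat \<Rightarrow> tensor \<Rightarrow> tensor \<Rightarrow> tensor \<Rightarrow> tensor" where
  "layer N t Wt Bt X = Psimap N t (Smap N t (tadd (conv N t Wt X) Bt))"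

text \<open>f_{b-1} o ... o f_a  (identity if a >= b)\<close>
definition comp_layers :: "cnn_arch \<Rightarrow> (nat \<Rightarrow> tensor) \<Rightarrow> (nat \<Rightarrow> tensor) \<Rightarrow> nat \<Rightarrow> nat \<Rightarrow> tensor \<Rightarrow> tensor" where
  "comp_layers N W B a b X = foldl (\<lambda>x s. layer N s (W s) (B s) x) X [a..<b]"

definition alpha :: "cnn_arch \<Rightarrow> (nat \<Rightarrow> tensor) \<Rightarrow> (nat \<Rightarrow> tensor) \<Rightarrow> nat \<Rightarrow> tensor \<Rightarrow> tensor" where
  "alpha N W B t = comp_layers N W B 1 (Suc t)"

definition omega :: "cnn_arch \<Rightarrow> nat \<Rightarrow> (nat \<Rightarrow> tensor) \<Rightarrow> (nat \<Rightarrow> tensor) \<Rightarrow> nat \<Rightarrow> tensor \<Rightarrow> tensor" where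
  "omega N L W B t = comp_layers N W B t (Suc L)"

definition network :: "cnn_arch \<Rightarrow> nat \<Rightarrow> (nat \<Rightarrow> tensor) \<Rightarrow> (nat \<Rightarrow> tensor) \<Rightarrow> tensor \<Rightarrow> tensor" where
  "network N L W B = comp_layers N W B 1 (Suc L)"

definition theta_val :: "(nat \<Rightarrow> tensor) \<Rightarrow> (nat \<Rightarrow> tensor) \<Rightarrow> nat \<Rightarrow> bool \<Rightarrow> tensor" where
  "theta_val W B t isW = (if isW then W t else B t)"

definition theta_dims :: "cnn_arch \<Rightarrow> nat \<Rightarrow> bool \<Rightarrow> dims" where
  "theta_dims N t isW = (if isW then (ker_rows N t, ker_cols N t, chans N (Suc t))
                         else (rows_bar N t, cols_bar N t, chans N (Suc t)))"

definition network_param :: "cnn_arch \<Rightarrow> nat \<Rightarrow> (nat \<Rightarrow> tensor) \<Rightarrow> (nat \<Rightarrow> tensor) \<Rightarrow> nat \<Rightarrow> bool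
    \<Rightarrow> tensor \<Rightarrow> tensor \<Rightarrow> tensor" where
  "network_param N L W B t isW = (\<lambda>X \<theta>.
     if isW then network N L (W(t := \<theta>)) B X else network N L W (B(t := \<theta>)) X)"

definition layer_param :: "cnn_arch \<Rightarrow> (nat \<Rightarrow> tensor) \<Rightarrow> (nat \<Rightarrow> tensor) \<Rightarrow> nat \<Rightarrow> bool
    \<Rightarrow> tensor \<Rightarrow> tensor \<Rightarrow> tensor" where
  "layer_param N W B t isW = (\<lambda>X \<theta>.
     if isW then layer N t \<theta> (B t) X else layer N t (W t) \<theta> X)"

end

theory Submission
  imports Defs
begin


definition tz :: tensor where "tz = (\<lambda>j k i. 0)"

lemma tadd_assoc: "tadd (tadd a b) c = tadd a (tadd b c)" by (simp add: tadd_def algebra_simps)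
lemma tadd_commute: "tadd a b = tadd b a" by (simp add: tadd_def algebra_simps)
lemma tadd_left_commute: "tadd a (tadd b c) = tadd b (tadd a c)" by (simp add: tadd_def algebra_simps)
lemmas tadd_ac = tadd_assoc tadd_commute tadd_left_commute
lemma tadd_tz[simp]: "tadd a tz = a" "tadd tz a = a" by (simp_all add: tadd_def tz_def)
lemma tscale_tz[simp]: "tscale c tz = tz" "tscale 0 a = tz" by (simp_all add: tscale_def tz_def)
lemma tscale_tadd: "tscale c (tadd a b) = tadd (tscale c a) (tscale c b)" by (simp add: tscale_def tadd_def algebra_simps)
lemma tadd_x_tscale0[simp]: "tadd x (tscale 0 e) = x" by (simp add: tadd_def tscale_def)

lemma tinner_tadd1: "tinner d (tadd a b) y = tinner d a y + tinner d b y"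
  by (simp add: tinner_def tadd_def distrib_right sum.distrib split: prod.split)
lemma tinner_tadd2: "tinner d y (tadd a b) = tinner d y a + tinner d y b"
  by (simp add: tinner_def tadd_def distrib_left sum.distrib split: prod.split)
lemma tinner_tscale1: "tinner d (tscale c a) y = c * tinner d a y"
  by (simp add: tinner_def tscale_def sum_distrib_left mult.assoc split: prod.split)

lemma tinner_triple: "tinner (n,l,m) a b = (\<Sum>p\<in>{1..n}\<times>{1..l}\<times>{1..m}. a (fst p) (fst (snd p)) (snd (snd p)) * b (fst p) (fst (snd p)) (snd (snd p)))"
  unfolding tinner_def by (simp add: sum.cartesian_product split_beta)

lemma tbox_iff: "x \<in> tbox (n,l,m) \<longleftrightarrow> (\<forall>j k i. x j k i \<noteq> 0 \<longrightarrow> j\<in>{1..n} \<and> k\<in>{1..l} \<and> i\<in>{1..m})"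
  by (simp add: tbox_def)
lemma tbox_zero: "x \<in> tbox (n,l,m) \<Longrightarrow> \<not> (j\<in>{1..n} \<and> k\<in>{1..l} \<and> i\<in>{1..m}) \<Longrightarrow> x j k i = 0"
  unfolding tbox_iff by blast

lemma tadd_in_tbox: "tadd a b \<in> tbox d" if "a \<in> tbox d" "b \<in> tbox d"
proof -
  obtain n l m where d: "d = (n,l,m)" by (cases d)
  show ?thesis unfolding d
  proof (unfold tbox_def, simp only: mem_Collect_eq prod.case, intro allI impI)
    fix j k i assume h: "tadd a b j k i \<noteq> 0"
    have "a j k i \<noteq> 0 \<or> b j k i \<noteq> 0" using h by (auto simp: tadd_def)
    then show "j \<in> {1..n} \<and> k \<in> {1..l} \<and> i \<in> {1..m}"
      using tbox_zero[of a n l m j k i] tbox_zero[of b n l m j k i] that d by blast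
  qed
qed

lemma adjoint_eq:
  assumes "x \<in> tbox S" "\<forall>e\<in>tbox S. tinner T (Lm e) y = tinner S e x"
  shows "adjoint_on S T Lm y = x"
  unfolding adjoint_on_def
proof (rule the_equality)
  show "x \<in> tbox S \<and> (\<forall>e\<in>tbox S. tinner T (Lm e) y = tinner S e x)" using assms by blast
next
  fix x' assume h: "x' \<in> tbox S \<and> (\<forall>e\<in>tbox S. tinner T (Lm e) y = tinner S e x')"
  obtain n l m where S: "S = (n,l,m)" by (cases S) auto
  show "x' = x"
  proof (intro ext)
    fix j k i
    show "x' j k i = x j k i"
    proof (cases "j \<in> {1..n} \<and> k \<in> {1..l} \<and> i \<in> {1..m}")
      case True
      define u where "u = (\<lambda>a b c. if a = j \<and> b = k \<and> c = i then (1::real) else 0)"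
      have u: "u \<in> tbox S" using True by (auto simp: u_def S tbox_def)
      have eq: "tinner S u x' = tinner S u x" using conjunct2[OF h] assms(2) u by metis
      have gen: "tinner S u z = z j k i" for z
      proof -
        have "tinner S u z = (\<Sum>p\<in>{1..n}\<times>{1..l}\<times>{1..m}. if p = (j,k,i) then z j k i else 0)"
          unfolding S tinner_triple by (rule sum.cong) (auto simp: u_def)
        also have "\<dots> = z j k i" using True by (simp add: sum.delta')
        finally show "tinner S u z = z j k i" .
      qed
      show ?thesis using eq gen[of x] gen[of x'] by linarith
    next
      case False
      then show ?thesis using tbox_zero[of x' n l m j k i] tbox_zero[of x n l m j k i] conjunct1[OF h] assms(1) S by simp
    qed
  qed
qed




lemma adjoint_prop:
  assumes lin1: "\<And>a b. Lm (tadd a b) = tadd (Lm a) (Lm b)"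
    and lin2: "\<And>c a. Lm (tscale c a) = tscale c (Lm a)"
  shows "adjoint_on S T Lm y \<in> tbox S \<and> (\<forall>e\<in>tbox S. tinner T (Lm e) y = tinner S e (adjoint_on S T Lm y))"
proof -
  obtain n l m where S: "S = (n,l,m)" by (cases S) auto
  define P where "P = {1..n}\<times>{1..l}\<times>{1..m}"
  define un where "un = (\<lambda>p::nat\<times>nat\<times>nat. (\<lambda>a b c. if (a,b,c) = p then (1::real) else 0))"
  define ell where "ell = (\<lambda>e. tinner T (Lm e) y)"
  have ell_add: "ell (tadd a b) = ell a + ell b" for a b by (simp add: ell_def lin1 tinner_tadd1)
  have ell_sc: "ell (tscale c a) = c * ell a" for c a by (simp add: ell_def lin2 tinner_tscale1)
  have ell0: "ell tz = 0" using ell_sc[of 0 tz] by simp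
  have ell_sum: "finite Q \<Longrightarrow> ell (\<lambda>a b c. \<Sum>p\<in>Q. f p a b c) = (\<Sum>p\<in>Q. ell (f p))" for Q f
  proof (induction Q rule: finite_induct)
    case empty
    then show ?case using ell0 by (simp add: tz_def)
  next
    case (insert p Q)
    have "(\<lambda>a b c. \<Sum>p\<in>insert p Q. f p a b c) = tadd (f p) (\<lambda>a b c. \<Sum>p\<in>Q. f p a b c)"
      using insert by (simp add: tadd_def)
    then show ?case using insert by (simp add: ell_add)
  qed
  define x where "x = (\<lambda>j k i. if (j,k,i) \<in> P then ell (un (j,k,i)) else 0)"
  have xin: "x \<in> tbox S" by (auto simp: x_def tbox_def S P_def)
  have hprop: "\<forall>e\<in>tbox S. ell e = tinner S e x"
  proof
    fix e assume e: "e \<in> tbox S"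
    have dec: "e = (\<lambda>a b c. \<Sum>p\<in>P. tscale (e (fst p) (fst (snd p)) (snd (snd p))) (un p) a b c)"
    proof (intro ext)
      fix a b c
      have "(\<Sum>p\<in>P. tscale (e (fst p) (fst (snd p)) (snd (snd p))) (un p) a b c)
          = (\<Sum>p\<in>P. if p = (a,b,c) then e a b c else 0)"
        by (rule sum.cong) (auto simp: tscale_def un_def)
      also have "\<dots> = e a b c" using e tbox_zero[of e n l m a b c] S by (simp add: P_def)
      finally show "e a b c = (\<Sum>p\<in>P. tscale (e (fst p) (fst (snd p)) (snd (snd p))) (un p) a b c)" by simp
    qed
    have "ell e = ell (\<lambda>a b c. \<Sum>p\<in>P. tscale (e (fst p) (fst (snd p)) (snd (snd p))) (un p) a b c)"
      using dec by (rule arg_cong)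
    also have "\<dots> = (\<Sum>p\<in>P. ell (tscale (e (fst p) (fst (snd p)) (snd (snd p))) (un p)))"
      by (rule ell_sum) (simp add: P_def)
    also have "\<dots> = (\<Sum>p\<in>P. e (fst p) (fst (snd p)) (snd (snd p)) * x (fst p) (fst (snd p)) (snd (snd p)))"
      by (rule sum.cong) (auto simp: ell_sc x_def)
    also have "\<dots> = tinner S e x" by (simp add: S tinner_triple P_def)
    finally show "ell e = tinner S e x" .
  qed
  have "adjoint_on S T Lm y = x" using adjoint_eq[OF xin] hprop unfolding ell_def by blast
  then show ?thesis using xin hprop by (simp add: ell_def)
qed




definition hasD :: "(real \<Rightarrow> tensor) \<Rightarrow> (real \<Rightarrow> tensor) \<Rightarrow> bool" where
  "hasD \<phi> \<phi>' \<longleftrightarrow> (\<forall>q j k i. ((\<lambda>q. \<phi> q j k i) has_real_derivative \<phi>' q j k i) (at q))"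

lemma hasD_cong: "hasD \<phi> f \<Longrightarrow> (\<And>q. f q = g q) \<Longrightarrow> hasD \<phi> g"
  by (simp add: hasD_def)

lemma hasD_const: "hasD (\<lambda>q. c) (\<lambda>q. tz)"
  by (simp add: hasD_def tz_def)

lemma hasD_line: "hasD (\<lambda>s. tadd x (tscale s e)) (\<lambda>s. e)"
  unfolding hasD_def tadd_def tscale_def
  by (auto intro!: derivative_eq_intros)

lemma hasD_tadd: "hasD \<phi> \<phi>' \<Longrightarrow> hasD \<psi> \<psi>' \<Longrightarrow> hasD (\<lambda>q. tadd (\<phi> q) (\<psi> q)) (\<lambda>q. tadd (\<phi>' q) (\<psi>' q))"
  unfolding hasD_def tadd_def by (auto intro!: derivative_eq_intros)

lemma hasD_deriv: "hasD \<phi> \<phi>' \<Longrightarrow> (\<lambda>j k i. deriv (\<lambda>q. \<phi> q j k i) q0) = \<phi>' q0"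
  unfolding hasD_def by (auto intro!: ext DERIV_imp_deriv)

definition good :: "(tensor \<Rightarrow> tensor) \<Rightarrow> (tensor \<Rightarrow> tensor \<Rightarrow> tensor) \<Rightarrow> (tensor \<Rightarrow> tensor \<Rightarrow> tensor \<Rightarrow> tensor) \<Rightarrow> bool" where
  "good g dg d2g \<longleftrightarrow>
    (\<forall>\<phi> \<phi>'. hasD \<phi> \<phi>' \<longrightarrow> hasD (\<lambda>q. g (\<phi> q)) (\<lambda>q. dg (\<phi> q) (\<phi>' q))) \<and>
    (\<forall>\<phi> \<phi>' \<xi> \<xi>'. hasD \<phi> \<phi>' \<longrightarrow> hasD \<xi> \<xi>' \<longrightarrow>
        hasD (\<lambda>q. dg (\<phi> q) (\<xi> q)) (\<lambda>q. tadd (d2g (\<phi> q) (\<phi>' q) (\<xi> q)) (dg (\<phi> q) (\<xi>' q)))) \<and>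
    (\<forall>x a b. dg x (tadd a b) = tadd (dg x a) (dg x b)) \<and>
    (\<forall>x c a. dg x (tscale c a) = tscale c (dg x a)) \<and>
    (\<forall>x a b. d2g x a b = d2g x b a) \<and>
    (\<forall>x a b c. d2g x a (tadd b c) = tadd (d2g x a b) (d2g x a c)) \<and>
    (\<forall>x a c b. d2g x a (tscale c b) = tscale c (d2g x a b))"

lemma goodD1: assumes "good g dg d2g" "hasD \<phi> \<phi>'" shows "hasD (\<lambda>q. g (\<phi> q)) (\<lambda>q. dg (\<phi> q) (\<phi>' q))"
proof -
  have "\<forall>\<phi> \<phi>'. hasD \<phi> \<phi>' \<longrightarrow> hasD (\<lambda>q. g (\<phi> q)) (\<lambda>q. dg (\<phi> q) (\<phi>' q))"
    using assms(1) unfolding good_def by (rule conjunct1)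
  from this[rule_format, OF assms(2)] show ?thesis .
qed
lemma goodD2: assumes "good g dg d2g" "hasD \<phi> \<phi>'" "hasD \<xi> \<xi>'"
  shows "hasD (\<lambda>q. dg (\<phi> q) (\<xi> q)) (\<lambda>q. tadd (d2g (\<phi> q) (\<phi>' q) (\<xi> q)) (dg (\<phi> q) (\<xi>' q)))"
proof -
  have "\<forall>\<phi> \<phi>' \<xi> \<xi>'. hasD \<phi> \<phi>' \<longrightarrow> hasD \<xi> \<xi>' \<longrightarrow>
        hasD (\<lambda>q. dg (\<phi> q) (\<xi> q)) (\<lambda>q. tadd (d2g (\<phi> q) (\<phi>' q) (\<xi> q)) (dg (\<phi> q) (\<xi>' q)))"
    using assms(1) unfolding good_def by (rule conjunct2[THEN conjunct1])
  from this[rule_format, OF assms(2,3)] show ?thesis .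
qed
lemma goodD3: assumes "good g dg d2g" shows "dg x (tadd a b) = tadd (dg x a) (dg x b)"
  using assms unfolding good_def by simp
lemma goodD4: assumes "good g dg d2g" shows "dg x (tscale c a) = tscale c (dg x a)"
  using assms unfolding good_def by simp
lemma goodD5: assumes "good g dg d2g" shows "d2g x a b = d2g x b a"
  using assms unfolding good_def by simp
lemma goodD6: assumes "good g dg d2g" shows "d2g x a (tadd b b') = tadd (d2g x a b) (d2g x a b')"
  using assms unfolding good_def by simp
lemma goodD7: assumes "good g dg d2g" shows "d2g x a (tscale c b) = tscale c (d2g x a b)"
  using assms unfolding good_def by simp
lemmas goodD = goodD1 goodD2 goodD3 goodD4 goodD5 goodD6 goodD7

lemma good_dtz: "good g dg d2g \<Longrightarrow> dg x tz = tz"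
  using goodD(4)[of g dg d2g x 0 tz] by simp

lemma good_Dx: assumes "good g dg d2g" shows "Dx g x e = dg x e"
proof -
  have "hasD (\<lambda>s. g (tadd x (tscale s e))) (\<lambda>s. dg (tadd x (tscale s e)) e)"
    using goodD(1)[OF assms hasD_line] .
  from hasD_deriv[OF this, of 0] show ?thesis by (simp add: Dx_def)
qed

lemma good_D2: assumes "good g dg d2g" shows "D2 g x e eb = d2g x e eb"
proof -
  have eq: "(\<lambda>x'. Dx g x' eb) = (\<lambda>x'. dg x' eb)" using good_Dx[OF assms] by auto
  have "hasD (\<lambda>s. dg (tadd x (tscale s e)) eb) (\<lambda>s. tadd (d2g (tadd x (tscale s e)) e eb) (dg (tadd x (tscale s e)) tz))"
    using goodD(2)[OF assms hasD_line hasD_const] .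
  from hasD_deriv[OF this, of 0] show ?thesis
    by (simp only: D2_def eq) (simp add: Dx_def good_dtz[OF assms])
qed

lemma good_id: "good (\<lambda>x. x) (\<lambda>x e. e) (\<lambda>x e eb. tz)"
  unfolding good_def by (auto intro: hasD_cong)

lemma good_comp:
  assumes g1: "good g1 dg1 d2g1" and g2: "good g2 dg2 d2g2"
  shows "good (\<lambda>x. g2 (g1 x)) (\<lambda>x e. dg2 (g1 x) (dg1 x e))
     (\<lambda>x e eb. tadd (d2g2 (g1 x) (dg1 x e) (dg1 x eb)) (dg2 (g1 x) (d2g1 x e eb)))"
  unfolding good_def
proof (intro conjI allI impI)
  fix \<phi> \<phi>' assume h: "hasD \<phi> \<phi>'"
  show "hasD (\<lambda>q. g2 (g1 (\<phi> q))) (\<lambda>q. dg2 (g1 (\<phi> q)) (dg1 (\<phi> q) (\<phi>' q)))"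
    using goodD(1)[OF g2 goodD(1)[OF g1 h]] .
next
  fix \<phi> \<phi>' \<xi> \<xi>' assume h: "hasD \<phi> \<phi>'" and h2: "hasD \<xi> \<xi>'"
  have a: "hasD (\<lambda>q. g1 (\<phi> q)) (\<lambda>q. dg1 (\<phi> q) (\<phi>' q))" using goodD(1)[OF g1 h] .
  have b: "hasD (\<lambda>q. dg1 (\<phi> q) (\<xi> q)) (\<lambda>q. tadd (d2g1 (\<phi> q) (\<phi>' q) (\<xi> q)) (dg1 (\<phi> q) (\<xi>' q)))"
    using goodD(2)[OF g1 h h2] .
  show "hasD (\<lambda>q. dg2 (g1 (\<phi> q)) (dg1 (\<phi> q) (\<xi> q)))
          (\<lambda>q. tadd (tadd (d2g2 (g1 (\<phi> q)) (dg1 (\<phi> q) (\<phi>' q)) (dg1 (\<phi> q) (\<xi> q)))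
                          (dg2 (g1 (\<phi> q)) (d2g1 (\<phi> q) (\<phi>' q) (\<xi> q))))
                    (dg2 (g1 (\<phi> q)) (dg1 (\<phi> q) (\<xi>' q))))"
    using goodD(2)[OF g2 a b] by (rule hasD_cong) (simp add: goodD(3)[OF g2] tadd_assoc)
next
  fix x a b show "dg2 (g1 x) (dg1 x (tadd a b)) = tadd (dg2 (g1 x) (dg1 x a)) (dg2 (g1 x) (dg1 x b))"
    by (simp add: goodD(3)[OF g1] goodD(3)[OF g2])
next
  fix x c a show "dg2 (g1 x) (dg1 x (tscale c a)) = tscale c (dg2 (g1 x) (dg1 x a))"
    by (simp add: goodD(4)[OF g1] goodD(4)[OF g2])
next
  fix x a b show "tadd (d2g2 (g1 x) (dg1 x a) (dg1 x b)) (dg2 (g1 x) (d2g1 x a b)) =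
       tadd (d2g2 (g1 x) (dg1 x b) (dg1 x a)) (dg2 (g1 x) (d2g1 x b a))"
    using goodD(5)[OF g1] goodD(5)[OF g2] by metis
next
  fix x a b c show "tadd (d2g2 (g1 x) (dg1 x a) (dg1 x (tadd b c))) (dg2 (g1 x) (d2g1 x a (tadd b c))) =
       tadd (tadd (d2g2 (g1 x) (dg1 x a) (dg1 x b)) (dg2 (g1 x) (d2g1 x a b)))
        (tadd (d2g2 (g1 x) (dg1 x a) (dg1 x c)) (dg2 (g1 x) (d2g1 x a c)))"
    by (simp add: goodD(3)[OF g1] goodD(3)[OF g2] goodD(6)[OF g1] goodD(6)[OF g2] tadd_ac)
next
  fix x a c b show "tadd (d2g2 (g1 x) (dg1 x a) (dg1 x (tscale c b))) (dg2 (g1 x) (d2g1 x a (tscale c b))) =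
       tscale c (tadd (d2g2 (g1 x) (dg1 x a) (dg1 x b)) (dg2 (g1 x) (d2g1 x a b)))"
    by (simp add: goodD(4)[OF g1] goodD(4)[OF g2] goodD(7)[OF g1] goodD(7)[OF g2] tscale_tadd)
qed




definition actd :: "cnn_arch \<Rightarrow> nat \<Rightarrow> real \<Rightarrow> real" where "actd N s y = deriv (act N s) y"
definition actdd :: "cnn_arch \<Rightarrow> nat \<Rightarrow> real \<Rightarrow> real" where "actdd N s y = deriv (actd N s) y"

lemma act_derivs:
  assumes "twice_cont_diff (act N s)"
  shows "(act N s has_real_derivative actd N s y) (at y)" "(actd N s has_real_derivative actdd N s y) (at y)"
proof -
  obtain g' g'' where h1: "\<forall>x. (act N s has_real_derivative g' x) (at x)"
    and h2: "\<forall>x. (g' has_real_derivative g'' x) (at x)"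
    using assms unfolding twice_cont_diff_def by blast
  have e1: "actd N s = g'" using h1 by (auto simp: actd_def intro!: ext DERIV_imp_deriv)
  have e2: "actdd N s = g''" using h2 by (auto simp: actdd_def e1 intro!: ext DERIV_imp_deriv)
  show "(act N s has_real_derivative actd N s y) (at y)" using h1 e1 by simp
  show "(actd N s has_real_derivative actdd N s y) (at y)" using h2 e1 e2 by simp
qed

lemma DERIV_if0: "(c \<Longrightarrow> (f has_real_derivative f') (at q)) \<Longrightarrow>
   ((\<lambda>q. if c then f q else 0) has_real_derivative (if c then f' else 0)) (at q)"
  by (cases c) auto

definition S1 :: "cnn_arch \<Rightarrow> nat \<Rightarrow> tensor \<Rightarrow> tensor \<Rightarrow> tensor" where
  "S1 N s Z \<zeta> = (\<lambda>j k a.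
     if j \<in> {1..rows_bar N s} \<and> k \<in> {1..cols_bar N s} \<and> a \<in> {1..chans N (Suc s)}
     then actd N s (Z j k a) * \<zeta> j k a else 0)"

definition S2 :: "cnn_arch \<Rightarrow> nat \<Rightarrow> tensor \<Rightarrow> tensor \<Rightarrow> tensor \<Rightarrow> tensor" where
  "S2 N s Z \<zeta>1 \<zeta>2 = (\<lambda>j k a.
     if j \<in> {1..rows_bar N s} \<and> k \<in> {1..cols_bar N s} \<and> a \<in> {1..chans N (Suc s)}
     then actdd N s (Z j k a) * \<zeta>1 j k a * \<zeta>2 j k a else 0)"

lemma hasD_Psimap: "hasD \<phi> \<phi>' \<Longrightarrow> hasD (\<lambda>q. Psimap N s (\<phi> q)) (\<lambda>q. Psimap N s (\<phi>' q))"
  unfolding hasD_def Psimap_def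
  by (auto intro!: DERIV_if0 DERIV_sum DERIV_cmult)

lemma hasD_Smap: assumes "twice_cont_diff (act N s)"
  shows "hasD \<phi> \<phi>' \<Longrightarrow> hasD (\<lambda>q. Smap N s (\<phi> q)) (\<lambda>q. S1 N s (\<phi> q) (\<phi>' q))"
  unfolding hasD_def Smap_def S1_def
  by (auto intro!: DERIV_if0 DERIV_chain2[OF act_derivs(1)[OF assms]])

lemma hasD_S1: assumes "twice_cont_diff (act N s)"
  shows "hasD \<phi> \<phi>' \<Longrightarrow> hasD \<xi> \<xi>' \<Longrightarrow>
    hasD (\<lambda>q. S1 N s (\<phi> q) (\<xi> q)) (\<lambda>q. tadd (S2 N s (\<phi> q) (\<phi>' q) (\<xi> q)) (S1 N s (\<phi> q) (\<xi>' q)))"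
  unfolding hasD_def S1_def S2_def tadd_def
proof (intro allI impI)
  fix q j k a
  assume h1: "\<forall>q j k i. ((\<lambda>q. \<phi> q j k i) has_real_derivative \<phi>' q j k i) (at q)"
     and h2: "\<forall>q j k i. ((\<lambda>q. \<xi> q j k i) has_real_derivative \<xi>' q j k i) (at q)"
  have "((\<lambda>q. actd N s (\<phi> q j k a) * \<xi> q j k a) has_real_derivative
          actdd N s (\<phi> q j k a) * \<phi>' q j k a * \<xi> q j k a + actd N s (\<phi> q j k a) * \<xi>' q j k a) (at q)"
    by (rule DERIV_cong[OF DERIV_mult[OF DERIV_chain2[OF act_derivs(2)[OF assms]]]])
       (use h1 h2 in \<open>auto simp: algebra_simps\<close>)
  then show "((\<lambda>q. if j \<in> {1..rows_bar N s} \<and> k \<in> {1..cols_bar N s} \<and> a \<in> {1..chans N (Suc s)}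
                then actd N s (\<phi> q j k a) * \<xi> q j k a else 0) has_real_derivative
          (if j \<in> {1..rows_bar N s} \<and> k \<in> {1..cols_bar N s} \<and> a \<in> {1..chans N (Suc s)}
           then actdd N s (\<phi> q j k a) * \<phi>' q j k a * \<xi> q j k a else 0) +
          (if j \<in> {1..rows_bar N s} \<and> k \<in> {1..cols_bar N s} \<and> a \<in> {1..chans N (Suc s)}
           then actd N s (\<phi> q j k a) * \<xi>' q j k a else 0)) (at q)"
    by (cases "j \<in> {1..rows_bar N s} \<and> k \<in> {1..cols_bar N s} \<and> a \<in> {1..chans N (Suc s)}") auto
qed

lemma DERIV_bilin:
  assumes "\<And>r s. ((\<lambda>q. w q r s) has_real_derivative w' r s) (at q0)"
    and "\<And>r s. ((\<lambda>q. P q r s) has_real_derivative P' r s) (at q0)"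
  shows "((\<lambda>q. \<Sum>r\<in>R. \<Sum>s\<in>S. w q r s * P q r s) has_real_derivative
     (\<Sum>r\<in>R. \<Sum>s\<in>S. w' r s * P q0 r s) + (\<Sum>r\<in>R. \<Sum>s\<in>S. w q0 r s * P' r s)) (at q0)"
proof -
  have "((\<lambda>q. \<Sum>r\<in>R. \<Sum>s\<in>S. w q r s * P q r s) has_real_derivative
     (\<Sum>r\<in>R. \<Sum>s\<in>S. w' r s * P q0 r s + P' r s * w q0 r s)) (at q0)"
    by (intro DERIV_sum DERIV_mult assms)
  then show ?thesis by (simp add: sum.distrib mult.commute)
qed

lemma conv_expand: "conv N t Wt X = (\<lambda>j k a.
     if j \<in> {1..rows_bar N t} \<and> k \<in> {1..cols_bar N t} \<and> a \<in> {1..chans N (Suc t)} then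
       (\<Sum>r\<in>{1..ker_rows N t}. \<Sum>s\<in>{1..ker_cols N t}. Wt r s a *
          (\<Sum>i\<in>{1..chans N t}. mix N t a i * (if r \<in> {1..ker_rows N t} \<and> s \<in> {1..ker_cols N t}
             then X (1 + (j - 1) * stride N t + r - 1) (1 + (k - 1) * stride N t + s - 1) i else 0)))
     else 0)"
  unfolding conv_def mat_inner_def Phi_def Kcrop_def kappa_def by (simp add: atLeastAtMost_iff)

lemma hasD_conv: "hasD \<omega> \<omega>' \<Longrightarrow> hasD \<phi> \<phi>' \<Longrightarrow>
   hasD (\<lambda>q. conv N t (\<omega> q) (\<phi> q)) (\<lambda>q. tadd (conv N t (\<omega>' q) (\<phi> q)) (conv N t (\<omega> q) (\<phi>' q)))"
  unfolding hasD_def conv_expand tadd_def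
proof (intro allI impI)
  fix q j k a
  assume h1: "\<forall>q j k i. ((\<lambda>q. \<omega> q j k i) has_real_derivative \<omega>' q j k i) (at q)"
     and h2: "\<forall>q j k i. ((\<lambda>q. \<phi> q j k i) has_real_derivative \<phi>' q j k i) (at q)"
  let ?c = "j \<in> {1..rows_bar N t} \<and> k \<in> {1..cols_bar N t} \<and> a \<in> {1..chans N (Suc t)}"
  let ?P = "\<lambda>X r s. (\<Sum>i\<in>{1..chans N t}. mix N t a i * (if r \<in> {1..ker_rows N t} \<and> s \<in> {1..ker_cols N t}
             then X (1 + (j - 1) * stride N t + r - 1) (1 + (k - 1) * stride N t + s - 1) i else 0))"
  have dP: "((\<lambda>q. ?P (\<phi> q) r s) has_real_derivative ?P (\<phi>' q) r s) (at q)" for r s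
    by (intro DERIV_sum DERIV_cmult DERIV_if0) (use h2 in auto)
  have "((\<lambda>q. \<Sum>r\<in>{1..ker_rows N t}. \<Sum>s\<in>{1..ker_cols N t}. \<omega> q r s a * ?P (\<phi> q) r s) has_real_derivative
     (\<Sum>r\<in>{1..ker_rows N t}. \<Sum>s\<in>{1..ker_cols N t}. \<omega>' q r s a * ?P (\<phi> q) r s) +
     (\<Sum>r\<in>{1..ker_rows N t}. \<Sum>s\<in>{1..ker_cols N t}. \<omega> q r s a * ?P (\<phi>' q) r s)) (at q)"
    by (rule DERIV_bilin) (use h1 dP in auto)
  then show "((\<lambda>q. if ?c then \<Sum>r\<in>{1..ker_rows N t}. \<Sum>s\<in>{1..ker_cols N t}. \<omega> q r s a * ?P (\<phi> q) r s else 0)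
     has_real_derivative (if ?c then \<Sum>r\<in>{1..ker_rows N t}. \<Sum>s\<in>{1..ker_cols N t}. \<omega>' q r s a * ?P (\<phi> q) r s else 0) +
        (if ?c then \<Sum>r\<in>{1..ker_rows N t}. \<Sum>s\<in>{1..ker_cols N t}. \<omega> q r s a * ?P (\<phi>' q) r s else 0)) (at q)"
    by (cases ?c) auto
qed




lemma if_add0: "(if c then x + y else (0::real)) = (if c then x else 0) + (if c then y else 0)" by simp
lemma if_mult0: "(if c then r * x else (0::real)) = r * (if c then x else 0)" by simp

lemma Psimap_tadd: "Psimap N s (tadd a b) = tadd (Psimap N s a) (Psimap N s b)"
  unfolding Psimap_def tadd_def by (auto simp: distrib_left sum.distrib intro!: ext)
lemma Psimap_tscale: "Psimap N s (tscale c a) = tscale c (Psimap N s a)"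
  unfolding Psimap_def tscale_def by (auto simp: sum_distrib_left mult.left_commute intro!: ext)

lemma S1_tadd: "S1 N s Z (tadd a b) = tadd (S1 N s Z a) (S1 N s Z b)"
  unfolding S1_def tadd_def by (auto simp: distrib_left intro!: ext)
lemma S1_tscale: "S1 N s Z (tscale c a) = tscale c (S1 N s Z a)"
  unfolding S1_def tscale_def by (auto simp: mult.left_commute intro!: ext)
lemma S2_sym: "S2 N s Z a b = S2 N s Z b a"
  unfolding S2_def by (auto simp: mult.commute mult.left_commute intro!: ext)
lemma S2_tadd: "S2 N s Z a (tadd b c) = tadd (S2 N s Z a b) (S2 N s Z a c)"
  unfolding S2_def tadd_def by (auto simp: distrib_left intro!: ext)
lemma S2_tscale: "S2 N s Z a (tscale c b) = tscale c (S2 N s Z a b)"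
  unfolding S2_def tscale_def by (auto simp: mult.commute mult.left_commute intro!: ext)

lemma conv_tadd1: "conv N t (tadd a b) X = tadd (conv N t a X) (conv N t b X)"
  unfolding conv_expand tadd_def by (auto simp: distrib_right sum.distrib intro!: ext)
lemma conv_tscale1: "conv N t (tscale c a) X = tscale c (conv N t a X)"
  unfolding conv_expand tscale_def by (auto simp: sum_distrib_left mult.assoc intro!: ext)
lemma conv_tadd2: "conv N t W (tadd a b) = tadd (conv N t W a) (conv N t W b)"
  unfolding conv_expand tadd_def by (auto simp: if_add0 distrib_left sum.distrib intro!: ext)
lemma conv_tscale2: "conv N t W (tscale c a) = tscale c (conv N t W a)"
  unfolding conv_expand tscale_def by (auto simp: if_mult0 sum_distrib_left mult.left_commute intro!: ext)
lemma conv_tz1[simp]: "conv N t tz X = tz"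
  using conv_tscale1[of N t 0 tz X] by simp
lemma conv_tz2[simp]: "conv N t W tz = tz"
  using conv_tscale2[of N t W 0 tz] by simp
lemma Psimap_tz[simp]: "Psimap N s tz = tz"
  using Psimap_tscale[of N s 0 tz] by simp
lemma S1_tz[simp]: "S1 N s Z tz = tz"
  using S1_tscale[of N s Z 0 tz] by simp

definition Zt :: "cnn_arch \<Rightarrow> nat \<Rightarrow> tensor \<Rightarrow> tensor \<Rightarrow> tensor \<Rightarrow> tensor" where
  "Zt N s W B X = tadd (conv N s W X) B"
definition dZ :: "cnn_arch \<Rightarrow> nat \<Rightarrow> tensor \<Rightarrow> tensor \<Rightarrow> tensor \<Rightarrow> tensor \<Rightarrow> tensor \<Rightarrow> tensor" where
  "dZ N s W X dW dB dX = tadd (tadd (conv N s dW X) (conv N s W dX)) dB"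
definition dlay :: "cnn_arch \<Rightarrow> nat \<Rightarrow> tensor \<Rightarrow> tensor \<Rightarrow> tensor \<Rightarrow> tensor \<Rightarrow> tensor \<Rightarrow> tensor \<Rightarrow> tensor" where
  "dlay N s W B X dW dB dX = Psimap N s (S1 N s (Zt N s W B X) (dZ N s W X dW dB dX))"
definition d2lay :: "cnn_arch \<Rightarrow> nat \<Rightarrow> tensor \<Rightarrow> tensor \<Rightarrow> tensor \<Rightarrow> tensor \<Rightarrow> tensor \<Rightarrow> tensor
     \<Rightarrow> tensor \<Rightarrow> tensor \<Rightarrow> tensor \<Rightarrow> tensor" where
  "d2lay N s W B X aW aB aX bW bB bX = Psimap N s (tadd
      (S2 N s (Zt N s W B X) (dZ N s W X aW aB aX) (dZ N s W X bW bB bX))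
      (S1 N s (Zt N s W B X) (tadd (conv N s aW bX) (conv N s bW aX))))"

lemma dZ_tadd: "dZ N s W X (tadd aW bW) (tadd aB bB) (tadd aX bX) = tadd (dZ N s W X aW aB aX) (dZ N s W X bW bB bX)"
  unfolding dZ_def by (simp add: conv_tadd1 conv_tadd2 tadd_ac)
lemma dZ_tscale: "dZ N s W X (tscale c aW) (tscale c aB) (tscale c aX) = tscale c (dZ N s W X aW aB aX)"
  unfolding dZ_def by (simp add: conv_tscale1 conv_tscale2 tscale_tadd)

lemma dlay_tadd: "dlay N s W B X (tadd aW bW) (tadd aB bB) (tadd aX bX) = tadd (dlay N s W B X aW aB aX) (dlay N s W B X bW bB bX)"
  unfolding dlay_def by (simp add: dZ_tadd S1_tadd Psimap_tadd)
lemma dlay_tscale: "dlay N s W B X (tscale c aW) (tscale c aB) (tscale c aX) = tscale c (dlay N s W B X aW aB aX)"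
  unfolding dlay_def by (simp add: dZ_tscale S1_tscale Psimap_tscale)
lemma d2lay_sym: "d2lay N s W B X aW aB aX bW bB bX = d2lay N s W B X bW bB bX aW aB aX"
  unfolding d2lay_def by (simp add: S2_sym tadd_commute)
lemma d2lay_tadd: "d2lay N s W B X aW aB aX (tadd bW cW) (tadd bB cB) (tadd bX cX) =
   tadd (d2lay N s W B X aW aB aX bW bB bX) (d2lay N s W B X aW aB aX cW cB cX)"
  unfolding d2lay_def by (simp add: dZ_tadd S2_tadd S1_tadd conv_tadd1 conv_tadd2 Psimap_tadd tadd_ac)
lemma d2lay_tscale: "d2lay N s W B X aW aB aX (tscale c bW) (tscale c bB) (tscale c bX) =
   tscale c (d2lay N s W B X aW aB aX bW bB bX)"
  unfolding d2lay_def by (simp add: dZ_tscale S2_tscale S1_tscale conv_tscale1 conv_tscale2 Psimap_tscale tscale_tadd[symmetric])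
lemma dlay_tz[simp]: "dlay N s W B X tz tz tz = tz"
  using dlay_tscale[of N s W B X 0 tz tz tz] by simp

lemma hasD_layer:
  assumes act: "twice_cont_diff (act N s)"
    and h: "hasD \<omega> \<omega>'" "hasD \<beta> \<beta>'" "hasD \<phi> \<phi>'"
  shows "hasD (\<lambda>q. layer N s (\<omega> q) (\<beta> q) (\<phi> q)) (\<lambda>q. dlay N s (\<omega> q) (\<beta> q) (\<phi> q) (\<omega>' q) (\<beta>' q) (\<phi>' q))"
proof -
  have z: "hasD (\<lambda>q. Zt N s (\<omega> q) (\<beta> q) (\<phi> q)) (\<lambda>q. dZ N s (\<omega> q) (\<phi> q) (\<omega>' q) (\<beta>' q) (\<phi>' q))"
    unfolding Zt_def dZ_def by (intro hasD_tadd hasD_conv h)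
  show ?thesis unfolding layer_def dlay_def
    using hasD_Psimap[OF hasD_Smap[OF act z[unfolded Zt_def]]] unfolding Zt_def .
qed

lemma hasD_dlay:
  assumes act: "twice_cont_diff (act N s)"
    and h: "hasD \<omega> \<omega>'" "hasD \<beta> \<beta>'" "hasD \<phi> \<phi>'"
    and d: "hasD \<xi>W \<xi>W'" "hasD \<xi>B \<xi>B'" "hasD \<xi>X \<xi>X'"
  shows "hasD (\<lambda>q. dlay N s (\<omega> q) (\<beta> q) (\<phi> q) (\<xi>W q) (\<xi>B q) (\<xi>X q))
    (\<lambda>q. tadd (d2lay N s (\<omega> q) (\<beta> q) (\<phi> q) (\<omega>' q) (\<beta>' q) (\<phi>' q) (\<xi>W q) (\<xi>B q) (\<xi>X q))
              (dlay N s (\<omega> q) (\<beta> q) (\<phi> q) (\<xi>W' q) (\<xi>B' q) (\<xi>X' q)))"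
proof -
  have z: "hasD (\<lambda>q. Zt N s (\<omega> q) (\<beta> q) (\<phi> q)) (\<lambda>q. dZ N s (\<omega> q) (\<phi> q) (\<omega>' q) (\<beta>' q) (\<phi>' q))"
    unfolding Zt_def dZ_def by (intro hasD_tadd hasD_conv h)
  have dz: "hasD (\<lambda>q. dZ N s (\<omega> q) (\<phi> q) (\<xi>W q) (\<xi>B q) (\<xi>X q))
     (\<lambda>q. tadd (tadd (tadd (conv N s (\<xi>W' q) (\<phi> q)) (conv N s (\<xi>W q) (\<phi>' q)))
                     (tadd (conv N s (\<omega>' q) (\<xi>X q)) (conv N s (\<omega> q) (\<xi>X' q)))) (\<xi>B' q))"
    unfolding dZ_def by (intro hasD_tadd hasD_conv h d)
  show ?thesis
    unfolding dlay_def
    using hasD_Psimap[OF hasD_S1[OF act z dz]]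
    by (rule hasD_cong) (simp add: d2lay_def dlay_def dZ_def Psimap_tadd S1_tadd tadd_ac)
qed

lemma good_layer:
  assumes act: "twice_cont_diff (act N s)"
  shows "good (\<lambda>x. layer N s Wt Bt x) (\<lambda>x e. dlay N s Wt Bt x tz tz e) (\<lambda>x e eb. d2lay N s Wt Bt x tz tz e tz tz eb)"
  unfolding good_def
proof (intro conjI allI impI)
  fix \<phi> \<phi>' assume h: "hasD \<phi> \<phi>'"
  show "hasD (\<lambda>q. layer N s Wt Bt (\<phi> q)) (\<lambda>q. dlay N s Wt Bt (\<phi> q) tz tz (\<phi>' q))"
    using hasD_layer[OF act hasD_const hasD_const h] .
next
  fix \<phi> \<phi>' \<xi> \<xi>' assume h: "hasD \<phi> \<phi>'" and h2: "hasD \<xi> \<xi>'"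
  show "hasD (\<lambda>q. dlay N s Wt Bt (\<phi> q) tz tz (\<xi> q))
          (\<lambda>q. tadd (d2lay N s Wt Bt (\<phi> q) tz tz (\<phi>' q) tz tz (\<xi> q)) (dlay N s Wt Bt (\<phi> q) tz tz (\<xi>' q)))"
    using hasD_dlay[OF act hasD_const hasD_const h hasD_const hasD_const h2] .
next
  fix x a b show "dlay N s Wt Bt x tz tz (tadd a b) = tadd (dlay N s Wt Bt x tz tz a) (dlay N s Wt Bt x tz tz b)"
    using dlay_tadd[of N s Wt Bt x tz tz tz tz a b] by simp
next
  fix x c a show "dlay N s Wt Bt x tz tz (tscale c a) = tscale c (dlay N s Wt Bt x tz tz a)"
    using dlay_tscale[of N s Wt Bt x c tz tz a] by simp
next
  fix x a b show "d2lay N s Wt Bt x tz tz a tz tz b = d2lay N s Wt Bt x tz tz b tz tz a"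
    by (rule d2lay_sym)
next
  fix x a b c show "d2lay N s Wt Bt x tz tz a tz tz (tadd b c) = tadd (d2lay N s Wt Bt x tz tz a tz tz b) (d2lay N s Wt Bt x tz tz a tz tz c)"
    using d2lay_tadd[of N s Wt Bt x tz tz a tz tz tz tz b c] by simp
next
  fix x a c b show "d2lay N s Wt Bt x tz tz a tz tz (tscale c b) = tscale c (d2lay N s Wt Bt x tz tz a tz tz b)"
    using d2lay_tscale[of N s Wt Bt x tz tz a c tz tz b] by simp
qed




lemma comp_layers_Suc:
  "a \<le> b \<Longrightarrow> comp_layers N W B a (Suc b) = (\<lambda>x. layer N b (W b) (B b) (comp_layers N W B a b x))"
  unfolding comp_layers_def by (auto intro!: ext)

lemma comp_layers_empty: "b \<le> a \<Longrightarrow> comp_layers N W B a b = (\<lambda>x. x)"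
  unfolding comp_layers_def by (auto intro!: ext)

lemma good_comp_layers:
  "(\<forall>s\<in>{a..<b}. twice_cont_diff (act N s)) \<Longrightarrow> \<exists>dg d2g. good (comp_layers N W B a b) dg d2g"
proof (induction b)
  case 0
  then show ?case using good_id comp_layers_empty[of 0 a N W B] by auto
next
  case (Suc b)
  show ?case
  proof (cases "a \<le> b")
    case True
    from Suc obtain dg d2g where g: "good (comp_layers N W B a b) dg d2g" by auto
    have act: "twice_cont_diff (act N b)" using Suc.prems True by auto
    show ?thesis unfolding comp_layers_Suc[OF True]
      using good_comp[OF g good_layer[OF act]] by blast
  next
    case False
    then show ?thesis using good_id comp_layers_empty[of "Suc b" a N W B] by auto
  qed
qed

lemma comp_split:
  assumes "a \<le> t" "t < b"
  shows "comp_layers N W B a b x = comp_layers N W B (Suc t) b (layer N t (W t) (B t) (comp_layers N W B a t x))"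
proof -
  have "[a..<b] = [a..<t] @ t # [Suc t..<b]"
    using assms by (metis le_add_diff_inverse less_imp_le upt_add_eq_append upt_conv_Cons)
  then show ?thesis unfolding comp_layers_def by simp
qed

lemma comp_cong:
  assumes "\<forall>s\<in>{a..<b}. W' s = W s \<and> B' s = B s"
  shows "comp_layers N W' B' a b x = comp_layers N W B a b x"
  unfolding comp_layers_def using assms by (intro foldl_cong) auto

lemma Psimap_in_tbox: "Psimap N s Y \<in> tbox (sdims N (Suc s))"
  unfolding Psimap_def sdims_def tbox_def by auto

lemma dlay_in: "dlay N s W B X aW aB aX \<in> tbox (sdims N (Suc s))"
  unfolding dlay_def by (rule Psimap_in_tbox)
lemma d2lay_in: "d2lay N s W B X aW aB aX bW bB bX \<in> tbox (sdims N (Suc s))"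
  unfolding d2lay_def by (rule Psimap_in_tbox)



theorem theorem11:
  fixes N :: cnn_arch and L t :: nat and W B :: "nat \<Rightarrow> tensor"
    and X V Y :: tensor and isW :: bool
  assumes act_C2: "\<forall>s\<in>{1..L}. twice_cont_diff (act N s)"
    and stride_pos: "\<forall>s\<in>{1..L}. stride N s \<ge> 1"
    and crops_rows: "\<forall>s\<in>{1..L}. \<forall>j\<in>{1..rows_bar N s}.
                       1 + (j - 1) * stride N s + ker_rows N s - 1 \<le> rows N s"
    and crops_cols: "\<forall>s\<in>{1..L}. \<forall>k\<in>{1..cols_bar N s}.
                       1 + (k - 1) * stride N s + ker_cols N s - 1 \<le> cols N s"
    and W_in: "\<forall>s\<in>{1..L}. W s \<in> tbox (ker_rows N s, ker_cols N s, chans N (Suc s))"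
    and B_in: "\<forall>s\<in>{1..L}. B s \<in> tbox (rows_bar N s, cols_bar N s, chans N (Suc s))"
    and t_range: "t \<in> {1..L}"
    and X_in: "X \<in> tbox (sdims N 1)"
    and V_in: "V \<in> tbox (sdims N 1)"
    and Y_in: "Y \<in> tbox (sdims N (Suc L))"
  shows "adjoint_on (theta_dims N t isW) (sdims N (Suc L))
           (contr_right (DthD (network_param N L W B t isW) X (theta_val W B t isW)) V) Y
       = tadd
           (adjoint_on (theta_dims N t isW) (sdims N (Suc t))
              (Dth (layer_param N W B t isW) (alpha N W B (t - 1) X) (theta_val W B t isW))
              (adjoint_on (sdims N (Suc t)) (sdims N (Suc L))
                 (contr_left (Dx (alpha N W B t) X V)
                    (D2 (omega N L W B (Suc t)) (alpha N W B t X))) Y))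
           (adjoint_on (theta_dims N t isW) (sdims N (Suc t))
              (contr_left (Dx (alpha N W B (t - 1)) X V)
                 (DDth (layer_param N W B t isW) (alpha N W B (t - 1) X) (theta_val W B t isW)))
              (adjoint_on (sdims N (Suc t)) (sdims N (Suc L))
                 (Dx (omega N L W B (Suc t)) (alpha N W B t X)) Y))"
  proof -
  define \<theta>0 where "\<theta>0 = theta_val W B t isW"
  define WW where "WW = (\<lambda>\<theta>. if isW then \<theta> else W t)"
  define BB where "BB = (\<lambda>\<theta>. if isW then B t else \<theta>)"
  define uW where "uW = (\<lambda>u. if isW then u else tz)"
  define uB where "uB = (\<lambda>u. if isW then tz else u)"
  define A where "A = alpha N W B (t - 1)"
  define \<Omega> where "\<Omega> = omega N L W B (Suc t)"
  have t1: "1 \<le> t" "t \<le> L" using t_range by auto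
  have actt: "twice_cont_diff (act N t)" using act_C2 t_range by auto
  have WW0: "WW \<theta>0 = W t" "BB \<theta>0 = B t" by (auto simp: WW_def BB_def \<theta>0_def theta_val_def)
  have F1: "layer_param N W B t isW = (\<lambda>x \<theta>. layer N t (WW \<theta>) (BB \<theta>) x)"
    by (cases isW) (auto simp: layer_param_def WW_def BB_def intro!: ext)
  have Aeq: "A = comp_layers N W B 1 t" unfolding A_def alpha_def using t1 by simp
  have F2': "network_param N L W B t isW x \<theta> = \<Omega> (layer N t (WW \<theta>) (BB \<theta>) (A x))" for x \<theta>
  proof -
    have c1: "comp_layers N W' B' 1 (Suc L) x = comp_layers N W B (Suc t) (Suc L) (layer N t (W' t) (B' t) (comp_layers N W B 1 t x))"
      if "\<forall>s. s \<noteq> t \<longrightarrow> W' s = W s \<and> B' s = B s" for W' B'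
    proof -
      have "comp_layers N W' B' 1 (Suc L) x = comp_layers N W' B' (Suc t) (Suc L) (layer N t (W' t) (B' t) (comp_layers N W' B' 1 t x))"
        using t1 by (intro comp_split) auto
      also have "comp_layers N W' B' 1 t x = comp_layers N W B 1 t x"
        by (rule comp_cong) (use that in auto)
      also have "comp_layers N W' B' (Suc t) (Suc L) = comp_layers N W B (Suc t) (Suc L)"
        by (rule ext, rule comp_cong) (use that in auto)
      finally show ?thesis .
    qed
    show "network_param N L W B t isW x \<theta> = \<Omega> (layer N t (WW \<theta>) (BB \<theta>) (A x))"
    proof (cases isW)
      case True
      have "\<forall>s. s \<noteq> t \<longrightarrow> (W(t:=\<theta>)) s = W s \<and> B s = B s" by auto
      from c1[OF this] show ?thesis
        by (simp add: True network_param_def network_def WW_def BB_def \<Omega>_def omega_def Aeq fun_upd_def)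
    next
      case False
      have "\<forall>s. s \<noteq> t \<longrightarrow> W s = W s \<and> (B(t:=\<theta>)) s = B s" by auto
      from c1[OF this] show ?thesis
        by (simp add: False network_param_def network_def WW_def BB_def \<Omega>_def omega_def Aeq fun_upd_def)
    qed
  qed
  have F2: "network_param N L W B t isW = (\<lambda>x \<theta>. \<Omega> (layer N t (WW \<theta>) (BB \<theta>) (A x)))"
    by (intro ext) (simp add: F2')
  have F3': "alpha N W B t x = layer N t (W t) (B t) (A x)" for x
  proof -
    have "alpha N W B t x = comp_layers N W B (Suc t) (Suc t) (layer N t (W t) (B t) (comp_layers N W B 1 t x))"
      unfolding alpha_def using t1 by (intro comp_split) auto
    then show "alpha N W B t x = layer N t (W t) (B t) (A x)" by (simp add: comp_layers_empty Aeq)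
  qed
  have F3: "alpha N W B t = (\<lambda>x. layer N t (W t) (B t) (A x))"
    by (intro ext) (simp add: F3')
  obtain dA d2A where gA: "good A dA d2A"
    using good_comp_layers[of 1 t N W B] act_C2 t1 unfolding Aeq by fastforce
  obtain dO d2O where gO: "good \<Omega> dO d2O"
    using good_comp_layers[of "Suc t" "Suc L" N W B] act_C2 t1 unfolding \<Omega>_def omega_def by fastforce
  have gL: "good (\<lambda>x. layer N t Wt Bt x) (\<lambda>x e. dlay N t Wt Bt x tz tz e) (\<lambda>x e eb. d2lay N t Wt Bt x tz tz e tz tz eb)" for Wt Bt
    using good_layer[OF actt] .
  define x0 where "x0 = A X"
  define w where "w = dA X V"
  define x1 where "x1 = layer N t (W t) (B t) x0"
  define e where "e = dlay N t (W t) (B t) x0 tz tz w"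
  define eb where "eb = (\<lambda>u. dlay N t (W t) (B t) x0 (uW u) (uB u) tz)"
  define DD where "DD = (\<lambda>u. d2lay N t (W t) (B t) x0 tz tz w (uW u) (uB u) tz)"
  have hw: "Dx A X V = w" unfolding w_def by (rule good_Dx[OF gA])
  have hx1: "alpha N W B t X = x1" unfolding x1_def x0_def F3 ..
  have he: "Dx (alpha N W B t) X V = e"
    unfolding F3 e_def x0_def w_def using good_Dx[OF good_comp[OF gA gL]] by simp
  have hWW: "hasD (\<lambda>q. WW (tadd \<theta>0 (tscale q u))) (\<lambda>q. uW u)" for u
    by (cases isW) (auto simp: WW_def uW_def hasD_line hasD_const)
  have hBB: "hasD (\<lambda>q. BB (tadd \<theta>0 (tscale q u))) (\<lambda>q. uB u)" for u
    by (cases isW) (auto simp: BB_def uB_def hasD_line hasD_const)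
  have E4: "Dth (layer_param N W B t isW) x' \<theta>0 u = dlay N t (W t) (B t) x' (uW u) (uB u) tz" for x' u
  proof -
    have "hasD (\<lambda>q. layer N t (WW (tadd \<theta>0 (tscale q u))) (BB (tadd \<theta>0 (tscale q u))) x')
       (\<lambda>q. dlay N t (WW (tadd \<theta>0 (tscale q u))) (BB (tadd \<theta>0 (tscale q u))) x' (uW u) (uB u) tz)"
      by (rule hasD_layer[OF actt hWW hBB hasD_const])
    from hasD_deriv[OF this, of 0] show ?thesis by (simp add: Dth_def F1 Dx_def WW0)
  qed
  have E5: "DDth (layer_param N W B t isW) x0 \<theta>0 w u = DD u" for u
  proof -
    have eq: "(\<lambda>x'. Dth (layer_param N W B t isW) x' \<theta>0 u) = (\<lambda>x'. dlay N t (W t) (B t) x' (uW u) (uB u) tz)"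
      using E4 by auto
    have "hasD (\<lambda>r. dlay N t (W t) (B t) (tadd x0 (tscale r w)) (uW u) (uB u) tz)
      (\<lambda>r. tadd (d2lay N t (W t) (B t) (tadd x0 (tscale r w)) tz tz w (uW u) (uB u) tz)
                 (dlay N t (W t) (B t) (tadd x0 (tscale r w)) tz tz tz))"
      by (rule hasD_dlay[OF actt hasD_const hasD_const hasD_line hasD_const hasD_const hasD_const])
    from hasD_deriv[OF this, of 0] show ?thesis
      by (simp only: DDth_def eq) (simp add: Dx_def DD_def)
  qed
  have E1: "Dx (\<lambda>x'. network_param N L W B t isW x' \<theta>) X V =
      dO (layer N t (WW \<theta>) (BB \<theta>) x0) (dlay N t (WW \<theta>) (BB \<theta>) x0 tz tz w)" for \<theta>
    unfolding F2 x0_def w_def using good_Dx[OF good_comp[OF good_comp[OF gA gL] gO]] by simp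
  have LHS: "contr_right (DthD (network_param N L W B t isW) X \<theta>0) V u =
      tadd (d2O x1 (eb u) e) (dO x1 (DD u))" for u
  proof -
    have eq: "(\<lambda>\<theta>'. Dx (\<lambda>x'. network_param N L W B t isW x' \<theta>') X V) =
      (\<lambda>\<theta>. dO (layer N t (WW \<theta>) (BB \<theta>) x0) (dlay N t (WW \<theta>) (BB \<theta>) x0 tz tz w))"
      using E1 by auto
    have y: "hasD (\<lambda>q. layer N t (WW (tadd \<theta>0 (tscale q u))) (BB (tadd \<theta>0 (tscale q u))) x0)
       (\<lambda>q. dlay N t (WW (tadd \<theta>0 (tscale q u))) (BB (tadd \<theta>0 (tscale q u))) x0 (uW u) (uB u) tz)"
      by (rule hasD_layer[OF actt hWW hBB hasD_const])
    have xi: "hasD (\<lambda>q. dlay N t (WW (tadd \<theta>0 (tscale q u))) (BB (tadd \<theta>0 (tscale q u))) x0 tz tz w)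
      (\<lambda>q. tadd (d2lay N t (WW (tadd \<theta>0 (tscale q u))) (BB (tadd \<theta>0 (tscale q u))) x0 (uW u) (uB u) tz tz tz w)
                 (dlay N t (WW (tadd \<theta>0 (tscale q u))) (BB (tadd \<theta>0 (tscale q u))) x0 tz tz tz))"
      by (rule hasD_dlay[OF actt hWW hBB hasD_const hasD_const hasD_const hasD_const])
    from hasD_deriv[OF goodD2[OF gO y xi], of 0] show ?thesis
      by (simp only: contr_right_def DthD_def eq)
         (simp add: Dx_def WW0 x1_def eb_def e_def DD_def d2lay_sym[of N t "W t" "B t" x0 "uW u" "uB u" tz])
  qed
  have uW_add: "uW (tadd a b) = tadd (uW a) (uW b)" "uB (tadd a b) = tadd (uB a) (uB b)" for a b
    by (auto simp: uW_def uB_def)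
  have uW_sc: "uW (tscale c a) = tscale c (uW a)" "uB (tscale c a) = tscale c (uB a)" for c a
    by (auto simp: uW_def uB_def)
  define Sth where "Sth = theta_dims N t isW"
  define St where "St = sdims N (Suc t)"
  define SL where "SL = sdims N (Suc L)"
  have m1: "contr_left e (D2 \<Omega> x1) = (\<lambda>b. d2O x1 e b)"
    by (auto simp: contr_left_def good_D2[OF gO])
  define Z1 where "Z1 = adjoint_on St SL (\<lambda>b. d2O x1 e b) Y"
  have Z1: "Z1 \<in> tbox St \<and> (\<forall>b\<in>tbox St. tinner SL (d2O x1 e b) Y = tinner St b Z1)"
    unfolding Z1_def by (rule adjoint_prop) (auto simp: goodD(6,7)[OF gO])
  have m2: "Dth (layer_param N W B t isW) x0 \<theta>0 = eb"
    using E4 by (auto simp: eb_def)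
  define P1 where "P1 = adjoint_on Sth St eb Z1"
  have P1: "P1 \<in> tbox Sth \<and> (\<forall>u\<in>tbox Sth. tinner St (eb u) Z1 = tinner Sth u P1)"
    unfolding P1_def
  proof (rule adjoint_prop)
    show "eb (tadd a b) = tadd (eb a) (eb b)" for a b
      using dlay_tadd[of N t "W t" "B t" x0 "uW a" "uW b" "uB a" "uB b" tz tz] by (simp add: eb_def uW_add)
    show "eb (tscale c a) = tscale c (eb a)" for c a
      using dlay_tscale[of N t "W t" "B t" x0 c "uW a" "uB a" tz] by (simp add: eb_def uW_sc)
  qed
  have m3: "Dx \<Omega> x1 = dO x1" by (auto simp: good_Dx[OF gO])
  define Z2 where "Z2 = adjoint_on St SL (dO x1) Y"
  have Z2: "Z2 \<in> tbox St \<and> (\<forall>b\<in>tbox St. tinner SL (dO x1 b) Y = tinner St b Z2)"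
    unfolding Z2_def by (rule adjoint_prop) (auto simp: goodD(3,4)[OF gO])
  have m4: "contr_left w (DDth (layer_param N W B t isW) x0 \<theta>0) = DD"
    using E5 by (auto simp: contr_left_def)
  define P2 where "P2 = adjoint_on Sth St DD Z2"
  have P2: "P2 \<in> tbox Sth \<and> (\<forall>u\<in>tbox Sth. tinner St (DD u) Z2 = tinner Sth u P2)"
    unfolding P2_def
  proof (rule adjoint_prop)
    show "DD (tadd a b) = tadd (DD a) (DD b)" for a b
      using d2lay_tadd[of N t "W t" "B t" x0 tz tz w "uW a" "uW b" "uB a" "uB b" tz tz] by (simp add: DD_def uW_add)
    show "DD (tscale c a) = tscale c (DD a)" for c a
      using d2lay_tscale[of N t "W t" "B t" x0 tz tz w c "uW a" "uB a" tz] by (simp add: DD_def uW_sc)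
  qed
  have main: "adjoint_on Sth SL (contr_right (DthD (network_param N L W B t isW) X \<theta>0) V) Y = tadd P1 P2"
  proof (rule adjoint_eq)
    show "tadd P1 P2 \<in> tbox Sth" using P1 P2 by (intro tadd_in_tbox) auto
    show "\<forall>u\<in>tbox Sth. tinner SL (contr_right (DthD (network_param N L W B t isW) X \<theta>0) V u) Y = tinner Sth u (tadd P1 P2)"
    proof
      fix u assume u: "u \<in> tbox Sth"
      have ebin: "eb u \<in> tbox St" unfolding eb_def St_def by (rule dlay_in)
      have DDin: "DD u \<in> tbox St" unfolding DD_def St_def by (rule d2lay_in)
      have "tinner SL (contr_right (DthD (network_param N L W B t isW) X \<theta>0) V u) Y
          = tinner SL (d2O x1 e (eb u)) Y + tinner SL (dO x1 (DD u)) Y"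
        by (simp add: LHS tinner_tadd1 goodD(5)[OF gO, of x1 "eb u" e])
      also have "\<dots> = tinner St (eb u) Z1 + tinner St (DD u) Z2" using Z1 Z2 ebin DDin by simp
      also have "\<dots> = tinner Sth u P1 + tinner Sth u P2" using P1 P2 u by simp
      also have "\<dots> = tinner Sth u (tadd P1 P2)" by (simp add: tinner_tadd2)
      finally show "tinner SL (contr_right (DthD (network_param N L W B t isW) X \<theta>0) V u) Y = tinner Sth u (tadd P1 P2)" .
    qed
  qed
  show ?thesis
    unfolding \<theta>0_def[symmetric] Sth_def[symmetric] St_def[symmetric] SL_def[symmetric]
      A_def[symmetric] \<Omega>_def[symmetric] x0_def[symmetric] hw hx1 he m1 m2 m3 m4
      Z1_def[symmetric] Z2_def[symmetric] P1_def[symmetric] P2_def[symmetric]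
    by (rule main)
qed


end
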